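(* Let $k\ge 2$, let $\epsilon>0$ and let $1\le r<k$. For all sufficiently large $n$ (as a function of $\epsilon$ and $k$), for $T\sim\mathcal{R}(n,k)$ the probability that there exist a permutation $\pi$ of $V(T)$, a perfect $r$-set $P$, a subset $R\subseteq P$ with $|R|\ge\epsilon n$ and a subset $S\subseteq A_{r+1}$ with $|S|\ge \epsilon n$ such that the event $X(T,\pi,P,R,S)$ occurs, is at most $\frac{1}{kn}$.
   Context: $\mathcal{R}(n,k)$ is the probability space of $k$-partite tournaments with vertex classes $A_1,\ldots,A_k$ of size $n$ each, every edge between distinct classes oriented independently and uniformly at random. For a permutation (bijection) $\pi:V(T)\to\{1,\ldots,kn\}$, $L_\pi(T)$ is the spanning subgraph of $T$ consisting of all edges $(u,v)\in E(T)$ with $\pi(u)<\pi(v)$, viewed as undirected. For $1\le r\le k$, a perfect $r$-set is a set $P$ of $n$ pairwise disjoint $r$-tuples $(a_1,\ldots,a_r)$ with $a_i\in A_i$ for each $i$. For $1\le r<k$, a perfect $r$-set $P$ and $\pi$, $L_\pi(P,T)$ is the bipartite graph with parts $P$ and $A_{r+1}$ in which $p=(a_1,\ldots,a_r)\in P$ and $v\in A_{r+1}$ are adjacent iff $\{v,a_i\}$ is an edge of $L_\pi(T)$ for every $i=1,\ldots,r$. For $R\subseteq P$ and $S\subseteq A_{r+1}$, $X(T,\pi,P,R,S)$ is the event that $L_\pi(P,T)$ has fewer than $|R||S|/2^{r+1}$ edges between $R$ and $S$. *)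

theory Defs
  imports Complex_Main
begin

definition vclass :: "nat \<Rightarrow> nat \<Rightarrow> (nat \<times> nat) set" where
  "vclass n i = {(i, j) | j. j < n}"

definition verts :: "nat \<Rightarrow> nat \<Rightarrow> (nat \<times> nat) set" where
  "verts n k = (\<Union>i\<in>{1..k}. vclass n i)"

definition is_kpart_tournament :: "nat \<Rightarrow> nat \<Rightarrow> ((nat \<times> nat) \<times> (nat \<times> nat)) set \<Rightarrow> bool" where
  "is_kpart_tournament n k T \<longleftrightarrow>
     T \<subseteq> {(u, v). u \<in> verts n k \<and> v \<in> verts n k \<and> fst u \<noteq> fst v} \<and>
     (\<forall>u\<in>verts n k. \<forall>v\<in>verts n k. fst u \<noteq> fst v \<longrightarrow> ((u, v) \<in> T \<longleftrightarrow> (v, u) \<notin> T))"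

definition tournaments :: "nat \<Rightarrow> nat \<Rightarrow> ((nat \<times> nat) \<times> (nat \<times> nat)) set set" where
  "tournaments n k = {T. is_kpart_tournament n k T}"

text \<open>The probability space R(n,k): independent uniform orientation of every edge is the
  same as the uniform distribution on the finite set of all such tournaments.\<close>

definition prob_R :: "nat \<Rightarrow> nat \<Rightarrow> (((nat \<times> nat) \<times> (nat \<times> nat)) set \<Rightarrow> bool) \<Rightarrow> real" where
  "prob_R n k E = real (card {T \<in> tournaments n k. E T}) / real (card (tournaments n k))"

definition is_perm :: "nat \<Rightarrow> nat \<Rightarrow> ((nat \<times> nat) \<Rightarrow> nat) \<Rightarrow> bool" where
  "is_perm n k \<pi> \<longleftrightarrow> bij_betw \<pi> (verts n k) {1..k * n}"

definition L_edge :: "((nat \<times> nat) \<times> (nat \<times> nat)) set \<Rightarrow> ((nat \<times> nat) \<Rightarrow> nat) \<Rightarrow>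
    nat \<times> nat \<Rightarrow> nat \<times> nat \<Rightarrow> bool" where
  "L_edge T \<pi> u v \<longleftrightarrow> ((u, v) \<in> T \<and> \<pi> u < \<pi> v) \<or> ((v, u) \<in> T \<and> \<pi> v < \<pi> u)"

definition perfect_rset :: "nat \<Rightarrow> nat \<Rightarrow> (nat \<times> nat) list set \<Rightarrow> bool" where
  "perfect_rset n r P \<longleftrightarrow>
     finite P \<and> card P = n \<and>
     (\<forall>p\<in>P. length p = r \<and> (\<forall>i<r. p ! i \<in> vclass n (Suc i))) \<and>
     (\<forall>p\<in>P. \<forall>q\<in>P. p \<noteq> q \<longrightarrow> set p \<inter> set q = {})"

definition LP_adj :: "((nat \<times> nat) \<times> (nat \<times> nat)) set \<Rightarrow> ((nat \<times> nat) \<Rightarrow> nat) \<Rightarrow>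
    (nat \<times> nat) list \<Rightarrow> nat \<times> nat \<Rightarrow> bool" where
  "LP_adj T \<pi> p v \<longleftrightarrow> (\<forall>a\<in>set p. L_edge T \<pi> v a)"

definition event_X :: "nat \<Rightarrow> ((nat \<times> nat) \<times> (nat \<times> nat)) set \<Rightarrow> ((nat \<times> nat) \<Rightarrow> nat) \<Rightarrow>
    (nat \<times> nat) list set \<Rightarrow> (nat \<times> nat) set \<Rightarrow> bool" where
  "event_X r T \<pi> R S \<longleftrightarrow>
     real (card {(p, v). p \<in> R \<and> v \<in> S \<and> LP_adj T \<pi> p v})
       < real (card R) * real (card S) / 2 ^ (r + 1)"

end

theory Submission
  imports Defs "HOL-Library.FuncSet"
begin


lemma sum_PiE_Un:
  fixes f g :: "('a \<Rightarrow> bool) \<Rightarrow> real"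
  assumes "finite A" "finite B" "A \<inter> B = {}"
  shows "(\<Sum>b\<in>PiE (A \<union> B) (\<lambda>_. UNIV). f (restrict b A) * g (restrict b B))
       = (\<Sum>a\<in>PiE A (\<lambda>_. UNIV). f a) * (\<Sum>c\<in>PiE B (\<lambda>_. UNIV). g c)"
proof -
  have "(\<Sum>a\<in>PiE A (\<lambda>_. UNIV). f a) * (\<Sum>c\<in>PiE B (\<lambda>_. UNIV). g c)
      = (\<Sum>(a,c)\<in>PiE A (\<lambda>_. UNIV) \<times> PiE B (\<lambda>_. UNIV). f a * g c)"
    by (simp add: sum_product sum.cartesian_product)
  also have "\<dots> = (\<Sum>b\<in>PiE (A \<union> B) (\<lambda>_. UNIV). f (restrict b A) * g (restrict b B))"
  proof -
    define mrg where "mrg = (\<lambda>(a::'a\<Rightarrow>bool) c x. if x \<in> A then a x else c x)"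
    have r1: "restrict (mrg a c) A = a" if "a \<in> extensional A" for a c
      using that by (auto simp: mrg_def extensional_def fun_eq_iff)
    have r2: "restrict (mrg a c) B = c" if "c \<in> extensional B" for a c
      using that assms(3) by (auto simp: mrg_def extensional_def fun_eq_iff)
    have r3: "mrg a c \<in> PiE (A \<union> B) (\<lambda>_. UNIV)" if "a \<in> extensional A" "c \<in> extensional B" for a c
      using that by (auto simp: mrg_def extensional_def PiE_def)
    have r5: "mrg a c \<in> extensional (A \<union> B)" if "a \<in> extensional A" "c \<in> extensional B" for a c
      using that by (auto simp: mrg_def extensional_def)
    have r4: "mrg (restrict b A) (restrict b B) = b" if "b \<in> PiE (A \<union> B) (\<lambda>_. UNIV)" for b
      using that by (auto simp: mrg_def extensional_def PiE_def fun_eq_iff)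
    show ?thesis
    by (rule sum.reindex_bij_witness[of _ "\<lambda>b. (restrict b A, restrict b B)"
          "\<lambda>(a,c). mrg a c"])
       (auto simp: PiE_def r1 r2 r3 r4 r5 simp del: restrict_apply)
  qed
  finally show ?thesis by simp
qed

lemma sum_prod_blocks:
  fixes h :: "'j \<Rightarrow> ('a \<Rightarrow> bool) \<Rightarrow> real" and D :: "'j \<Rightarrow> 'a set"
  assumes "finite J" "finite E" "\<forall>j\<in>J. D j \<subseteq> E"
    "\<forall>i\<in>J. \<forall>j\<in>J. i \<noteq> j \<longrightarrow> D i \<inter> D j = {}"
  shows "(\<Sum>b\<in>PiE E (\<lambda>_. UNIV). \<Prod>j\<in>J. h j (restrict b (D j)))
    = real (card (PiE (E - (\<Union>j\<in>J. D j)) (\<lambda>_. UNIV::bool set)))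
      * (\<Prod>j\<in>J. \<Sum>a\<in>PiE (D j) (\<lambda>_. UNIV). h j a)"
  using assms
proof (induction J arbitrary: E rule: finite_induct)
  case empty
  then show ?case by simp
next
  case (insert j0 J)
  define E' where "E' = E - D j0"
  have fin: "finite E'" "finite (D j0)" using insert.prems unfolding E'_def
    by (auto intro: finite_subset)
  have EU: "E = D j0 \<union> E'" using insert.prems unfolding E'_def by auto
  have sub: "\<forall>j\<in>J. D j \<subseteq> E'" using insert.prems insert.hyps unfolding E'_def by fastforce
  have "(\<Sum>b\<in>PiE E (\<lambda>_. UNIV). \<Prod>j\<in>insert j0 J. h j (restrict b (D j)))
     = (\<Sum>b\<in>PiE (D j0 \<union> E') (\<lambda>_. UNIV). h j0 (restrict b (D j0)) *
          (\<lambda>c. \<Prod>j\<in>J. h j (restrict c (D j))) (restrict b E'))"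
    using insert.hyps sub EU
    by (intro sum.cong refl) (auto simp: restrict_restrict Int_absorb1 intro!: prod.cong
       simp del: restrict_apply)
  also have "\<dots> = (\<Sum>a\<in>PiE (D j0) (\<lambda>_. UNIV). h j0 a) *
       (\<Sum>c\<in>PiE E' (\<lambda>_. UNIV). \<Prod>j\<in>J. h j (restrict c (D j)))"
    by (rule sum_PiE_Un) (use fin in \<open>auto simp: E'_def\<close>)
  also have "(\<Sum>c\<in>PiE E' (\<lambda>_. UNIV). \<Prod>j\<in>J. h j (restrict c (D j)))
     = real (card (PiE (E' - (\<Union>j\<in>J. D j)) (\<lambda>_. UNIV::bool set)))
      * (\<Prod>j\<in>J. \<Sum>a\<in>PiE (D j) (\<lambda>_. UNIV). h j a)"
    apply (rule insert.IH) using fin sub insert.prems by auto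
  also have "E' - (\<Union>j\<in>J. D j) = E - (\<Union>j\<in>insert j0 J. D j)" unfolding E'_def by auto
  finally show ?case using insert.hyps by (simp add: ac_simps)
qed



lemma sum_if_half:
  fixes S :: "'b set"
  assumes "finite S" "d \<in> S"
  shows "(\<Sum>a\<in>S. if a = d then 1/2 else (1::real)) = real (card S) - 1/2"
proof -
  have "(\<Sum>a\<in>S. if a = d then 1/2 else (1::real)) = (\<Sum>a\<in>S. 1 - (if a = d then 1/2 else 0))"
    by (intro sum.cong) auto
  also have "\<dots> = real (card S) - 1/2"
    using assms by (simp add: sum_subtractf)
  finally show ?thesis .
qed

lemma prod_if_pow:
  assumes "finite J"
  shows "(\<Prod>j\<in>J. if P j then (c::real) else 1) = c ^ card {j\<in>J. P j}"
proof -
  have "(\<Prod>j\<in>J. if P j then (c::real) else 1) = (\<Prod>j\<in>{j\<in>J. P j}. c)"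
    using assms by (simp add: prod.inter_filter[symmetric])
  then show ?thesis by simp
qed

lemma card_PiE_bool: "finite A \<Longrightarrow> card (PiE A (\<lambda>_. UNIV::bool set)) = 2 ^ card A"
  by (simp add: card_PiE)

lemma chernoff_blocks:
  fixes D :: "'j \<Rightarrow> 'a set" and d :: "'j \<Rightarrow> 'a \<Rightarrow> bool"
  assumes fJ: "finite J" and fE: "finite E" and DE: "\<forall>j\<in>J. D j \<subseteq> E"
    and disj: "\<forall>i\<in>J. \<forall>j\<in>J. i \<noteq> j \<longrightarrow> D i \<inter> D j = {}"
    and cD: "\<forall>j\<in>J. card (D j) \<le> r" and dD: "\<forall>j\<in>J. d j \<in> PiE (D j) (\<lambda>_. UNIV)"
  shows "real (card {b \<in> PiE E (\<lambda>_. UNIV). real (card {j\<in>J. restrict b (D j) = d j}) < real (card J) / 2^(r+1)})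
     \<le> real (card (PiE E (\<lambda>_. UNIV::bool set))) * exp (- ((1 - ln 2) / 2^(r+1)) * real (card J))"
proof -
  define F where "F = PiE E (\<lambda>_. UNIV::bool set)"
  define Y where "Y b = card {j\<in>J. restrict b (D j) = d j}" for b
  define Z where "Z b = (\<Prod>j\<in>J. if restrict b (D j) = d j then 1/2 else (1::real))" for b
  define C0 where "C0 = real (card (PiE (E - (\<Union>j\<in>J. D j)) (\<lambda>_. UNIV::bool set)))"
  define m where "m = card J"
  define x :: real where "x = 1 / 2^(r+1)"
  define Bad where "Bad = {b \<in> F. real (Y b) < real m / 2^(r+1)}"
  have fF: "finite F" unfolding F_def using fE by (simp add: finite_PiE)
  have fD: "finite (D j)" if "j \<in> J" for j using DE that fE by (meson finite_subset)
  have ZY: "Z b = (1/2) ^ Y b" for b unfolding Z_def Y_def using fJ by (rule prod_if_pow)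
  have sumZ: "(\<Sum>b\<in>F. Z b) = C0 * (\<Prod>j\<in>J. real (2 ^ card (D j)) - 1/2)"
  proof -
    have "(\<Sum>b\<in>F. Z b) = C0 * (\<Prod>j\<in>J. \<Sum>a\<in>PiE (D j) (\<lambda>_. UNIV). if a = d j then 1/2 else 1)"
      unfolding Z_def F_def C0_def by (rule sum_prod_blocks) (use fJ fE DE disj in auto)
    also have "\<dots> = C0 * (\<Prod>j\<in>J. real (2 ^ card (D j)) - 1/2)"
      using dD fD by (intro arg_cong[where f="\<lambda>u. C0 * u"] prod.cong refl)
        (simp add: sum_if_half finite_PiE card_PiE_bool)
    finally show ?thesis .
  qed
  have cardF: "real (card F) = C0 * (\<Prod>j\<in>J. real (2 ^ card (D j)))"
  proof -
    have "real (card F) = (\<Sum>b\<in>F. (1::real))" by simp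
    also have "\<dots> = C0 * (\<Prod>j\<in>J. \<Sum>a\<in>PiE (D j) (\<lambda>_. UNIV::bool set). (1::real))"
      unfolding F_def C0_def
      using sum_prod_blocks[of J E D "\<lambda>j a. (1::real)", OF fJ fE] DE disj by auto
    also have "\<dots> = C0 * (\<Prod>j\<in>J. real (2 ^ card (D j)))"
      using fD by (intro arg_cong[where f="\<lambda>u. C0 * u"] prod.cong refl)
        (simp add: finite_PiE card_PiE_bool)
    finally show ?thesis .
  qed
  have "(\<Prod>j\<in>J. real (2 ^ card (D j)) - 1/2) = (\<Prod>j\<in>J. real (2 ^ card (D j)) * (1 - 1 / 2 ^ (card (D j) + 1)))"
    by (intro prod.cong refl) (simp add: field_simps)
  also have "\<dots> = (\<Prod>j\<in>J. real (2 ^ card (D j))) * (\<Prod>j\<in>J. (1 - 1 / 2 ^ (card (D j) + 1)))"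
    by (simp add: prod.distrib)
  finally have sumZ2: "(\<Sum>b\<in>F. Z b) = real (card F) * (\<Prod>j\<in>J. (1 - 1 / 2 ^ (card (D j) + 1)))"
    using sumZ cardF by simp
  have "(\<Prod>j\<in>J. (1 - 1 / 2 ^ (card (D j) + 1)::real)) \<le> (\<Prod>j\<in>J. (1 - x))"
  proof (intro prod_mono conjI)
    fix j assume "j \<in> J"
    have "(2::real) ^ (card (D j) + 1) \<le> 2 ^ (r + 1)"
      using cD \<open>j \<in> J\<close> by (intro power_increasing) auto
    then have "x \<le> 1 / 2 ^ (card (D j) + 1)" unfolding x_def
      by (intro divide_left_mono) auto
    then show "1 - 1 / 2 ^ (card (D j) + 1) \<le> 1 - x" by simp
    have "(1::real) \<le> 2 ^ (card (D j) + 1)" by (rule one_le_power) simp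
    then have "(1::real) / 2 ^ (card (D j) + 1) \<le> 1" by simp
    then show "0 \<le> 1 - 1 / (2::real) ^ (card (D j) + 1)" by simp
  qed
  also have "\<dots> = (1 - x) ^ m" unfolding m_def by simp
  also have "\<dots> \<le> exp (- x) ^ m"
  proof (rule power_mono)
    show "1 - x \<le> exp (- x)" using exp_ge_add_one_self[of "-x"] by simp
    have "(1::real) \<le> 2^(r+1)" by (rule one_le_power) simp
    then have "x \<le> 1" unfolding x_def by simp
    then show "0 \<le> 1 - x" by simp
  qed
  also have "\<dots> = exp (- x * real m)" by (simp add: exp_of_nat_mult[symmetric] mult.commute)
  finally have sumZ3: "(\<Sum>b\<in>F. Z b) \<le> real (card F) * exp (- x * real m)"
    using sumZ2 by (simp add: mult_left_mono)
  define w where "w = exp (- ln 2 * (x * real m))"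
  have w: "w \<le> Z b" if "b \<in> Bad" for b
  proof -
    have lt: "real (Y b) \<le> x * real m" using that unfolding Bad_def x_def by simp
    have "Z b = (1/2) powr real (Y b)" using ZY by (simp add: powr_realpow)
    also have "(1/2::real) powr real (Y b) \<ge> (1/2) powr (x * real m)"
      by (rule powr_mono') (use lt in auto)
    also have "(1/2::real) powr (x * real m) = w"
      unfolding w_def powr_def by (simp add: ln_div)
    finally show ?thesis by simp
  qed
  have "real (card Bad) * w = (\<Sum>b\<in>Bad. w)" by simp
  also have "\<dots> \<le> (\<Sum>b\<in>Bad. Z b)" using w by (rule sum_mono)
  also have "\<dots> \<le> (\<Sum>b\<in>F. Z b)"
    by (rule sum_mono2) (use fF in \<open>auto simp: Bad_def ZY\<close>)
  also have "\<dots> \<le> real (card F) * exp (- x * real m)" by (rule sumZ3)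
  finally have "real (card Bad) \<le> real (card F) * exp (- x * real m) / w"
    unfolding w_def by (simp add: field_simps)
  also have "\<dots> = real (card F) * (exp (- x * real m) / w)" by simp
  also have "exp (- x * real m) / w = exp (- x * real m - (- ln 2 * (x * real m)))"
    unfolding w_def by (rule exp_diff[symmetric])
  also have "\<dots> = exp (- ((1 - ln 2) * x) * real m)"
    by (rule arg_cong[where f=exp]) (simp add: algebra_simps)
  finally show ?thesis unfolding Bad_def F_def Y_def m_def x_def by simp
qed



lemma mem_vclass: "x \<in> vclass n i \<longleftrightarrow> fst x = i \<and> snd x < n"
  by (cases x) (auto simp: vclass_def)

lemma mem_verts: "x \<in> verts n k \<longleftrightarrow> 1 \<le> fst x \<and> fst x \<le> k \<and> snd x < n"
  by (cases x) (auto simp: verts_def vclass_def)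

lemma verts_sub: "verts n k \<subseteq> {1..k} \<times> {..<n}"
  by (auto simp: mem_verts)

lemma finite_verts: "finite (verts n k)"
  using verts_sub by (rule finite_subset) simp

lemma card_verts: "card (verts n k) \<le> k * n"
proof -
  have "card (verts n k) \<le> card ({1..k} \<times> {..<n})"
    by (rule card_mono) (use verts_sub in auto)
  then show ?thesis by (simp add: card_cartesian_product)
qed

definition E0 :: "nat \<Rightarrow> nat \<Rightarrow> ((nat \<times> nat) \<times> (nat \<times> nat)) set" where
  "E0 n k = {(u, v). u \<in> verts n k \<and> v \<in> verts n k \<and> fst u < fst v}"

definition Phi :: "nat \<Rightarrow> nat \<Rightarrow> (((nat \<times> nat) \<times> (nat \<times> nat)) \<Rightarrow> bool) \<Rightarrow> ((nat \<times> nat) \<times> (nat \<times> nat)) set" where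
  "Phi n k b = {(x, y). ((x, y) \<in> E0 n k \<and> b (x, y)) \<or> ((y, x) \<in> E0 n k \<and> \<not> b (y, x))}"

lemma finite_E0: "finite (E0 n k)"
proof -
  have "E0 n k \<subseteq> verts n k \<times> verts n k" by (auto simp: E0_def)
  then show ?thesis by (rule finite_subset) (simp add: finite_verts)
qed

lemma Phi_tour: "Phi n k b \<in> tournaments n k"
  unfolding tournaments_def is_kpart_tournament_def Phi_def E0_def
  by (auto simp: mem_verts)

lemma Phi_inv: "b \<in> PiE (E0 n k) (\<lambda>_. UNIV) \<Longrightarrow> restrict (\<lambda>e. e \<in> Phi n k b) (E0 n k) = b"
  unfolding Phi_def by (auto simp: fun_eq_iff PiE_def extensional_def E0_def)

lemma Phi_surj:
  assumes "T \<in> tournaments n k"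
  shows "Phi n k (restrict (\<lambda>e. e \<in> T) (E0 n k)) = T"
proof (rule set_eqI)
  fix e :: "(nat \<times> nat) \<times> (nat \<times> nat)"
  obtain x y where e: "e = (x, y)" by (cases e)
  have K: "is_kpart_tournament n k T" using assms unfolding tournaments_def by simp
  note sub = conjunct1[OF K[unfolded is_kpart_tournament_def]]
  note tt = conjunct2[OF K[unfolded is_kpart_tournament_def]]
  have "(x, y) \<in> Phi n k (restrict (\<lambda>e. e \<in> T) (E0 n k))
     \<longleftrightarrow> ((x,y) \<in> E0 n k \<and> (x,y) \<in> T) \<or> ((y,x) \<in> E0 n k \<and> (y,x) \<notin> T)"
    by (simp add: Phi_def)
  also have "\<dots> \<longleftrightarrow> (x, y) \<in> T"
  proof
    assume "((x,y) \<in> E0 n k \<and> (x,y) \<in> T) \<or> ((y,x) \<in> E0 n k \<and> (y,x) \<notin> T)"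
    then show "(x, y) \<in> T"
    proof
      assume h: "(y,x) \<in> E0 n k \<and> (y,x) \<notin> T"
      then have "y \<in> verts n k" "x \<in> verts n k" "fst y \<noteq> fst x" by (auto simp: E0_def)
      then have "(y, x) \<in> T \<longleftrightarrow> (x, y) \<notin> T" by (intro tt[rule_format])
      with h show ?thesis by simp
    qed simp
  next
    assume h: "(x, y) \<in> T"
    then have xy: "x \<in> verts n k" "y \<in> verts n k" "fst x \<noteq> fst y" using sub by auto
    show "((x,y) \<in> E0 n k \<and> (x,y) \<in> T) \<or> ((y,x) \<in> E0 n k \<and> (y,x) \<notin> T)"
    proof (cases "fst x < fst y")
      case True
      then show ?thesis using xy h by (simp add: E0_def)
    next
      case False
      then have "fst y < fst x" using xy by simp
      moreover have "(x, y) \<in> T \<longleftrightarrow> (y, x) \<notin> T" using xy by (intro tt[rule_format])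
      then have "(y, x) \<notin> T" using h by simp
      ultimately show ?thesis using xy by (simp add: E0_def)
    qed
  qed
  finally show "e \<in> Phi n k (restrict (\<lambda>e. e \<in> T) (E0 n k)) \<longleftrightarrow> e \<in> T" using e by simp
qed

lemma Phi_bij: "bij_betw (Phi n k) (PiE (E0 n k) (\<lambda>_. UNIV)) (tournaments n k)"
  by (rule bij_betw_byWitness[where f'="\<lambda>T. restrict (\<lambda>e. e \<in> T) (E0 n k)"])
     (auto simp: Phi_inv Phi_surj Phi_tour)

lemma prob_R_eq:
  "prob_R n k Q = real (card {b \<in> PiE (E0 n k) (\<lambda>_. UNIV). Q (Phi n k b)})
      / real (card (PiE (E0 n k) (\<lambda>_. UNIV::bool set)))"
proof -
  let ?F = "PiE (E0 n k) (\<lambda>_. UNIV::bool set)"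
  have bij: "bij_betw (Phi n k) ?F (tournaments n k)" by (rule Phi_bij)
  have inj: "inj_on (Phi n k) ?F" using bij by (simp add: bij_betw_def)
  have img: "Phi n k ` ?F = tournaments n k" using bij by (simp add: bij_betw_def)
  have "Phi n k ` {b \<in> ?F. Q (Phi n k b)} = {T \<in> Phi n k ` ?F. Q T}" by auto
  then have "{T \<in> tournaments n k. Q T} = Phi n k ` {b \<in> ?F. Q (Phi n k b)}"
    using img by simp
  then have c1: "card {T \<in> tournaments n k. Q T} = card {b \<in> ?F. Q (Phi n k b)}"
    by (simp add: card_image inj_on_subset[OF inj])
  have c2: "card (tournaments n k) = card ?F"
    using card_image[OF inj] img by simp
  show ?thesis unfolding prob_R_def c1 c2 ..
qed

lemma L_edge_Phi:
  assumes inj: "inj_on \<pi> (verts n k)" and a: "a \<in> verts n k" and v: "v \<in> verts n k"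
    and lt: "fst a < fst v"
  shows "L_edge (Phi n k b) \<pi> v a \<longleftrightarrow> b (a, v) = (\<pi> a < \<pi> v)"
proof -
  have "a \<noteq> v" using lt by auto
  then have "\<pi> a \<noteq> \<pi> v" using inj a v by (meson inj_on_contraD)
  moreover have "(a, v) \<in> E0 n k" "(v, a) \<notin> E0 n k" using a v lt by (auto simp: E0_def)
  ultimately show ?thesis unfolding L_edge_def Phi_def by auto
qed



definition Dd :: "(nat \<times> nat) list \<times> (nat \<times> nat) \<Rightarrow> ((nat \<times> nat) \<times> (nat \<times> nat)) set" where
  "Dd j = (\<lambda>a. (a, snd j)) ` set (fst j)"

definition dd :: "((nat \<times> nat) \<Rightarrow> nat) \<Rightarrow> (nat \<times> nat) list \<times> (nat \<times> nat)
    \<Rightarrow> ((nat \<times> nat) \<times> (nat \<times> nat)) \<Rightarrow> bool" where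
  "dd \<pi> j = restrict (\<lambda>e. \<pi> (fst e) < \<pi> (snd e)) (Dd j)"

lemma restrict_eq_iff': "restrict f A = restrict g A \<longleftrightarrow> (\<forall>x\<in>A. f x = g x)"
  by (auto simp: fun_eq_iff restrict_def)

lemma perfect_entry:
  assumes "perfect_rset n r P" "p \<in> P" "a \<in> set p"
  shows "1 \<le> fst a \<and> fst a \<le> r \<and> snd a < n"
proof -
  have len: "length p = r" and cl: "\<forall>i<r. p ! i \<in> vclass n (Suc i)"
    using assms(1,2) unfolding perfect_rset_def by auto
  obtain i where "i < length p" "p ! i = a" using assms(3) by (auto simp: in_set_conv_nth)
  then show ?thesis using len cl by (auto simp: mem_vclass)
qed

lemma perfect_finite: "perfect_rset n r P \<Longrightarrow> finite P"
  by (simp add: perfect_rset_def)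

lemma perfect_disj: "perfect_rset n r P \<Longrightarrow> p \<in> P \<Longrightarrow> q \<in> P \<Longrightarrow> p \<noteq> q \<Longrightarrow> set p \<inter> set q = {}"
  unfolding perfect_rset_def by blast

lemma perfect_len: "perfect_rset n r P \<Longrightarrow> p \<in> P \<Longrightarrow> length p = r"
  unfolding perfect_rset_def by blast

lemma Dd_sub:
  assumes "perfect_rset n r P" "p \<in> P" "v \<in> vclass n (Suc r)" "Suc r \<le> k"
  shows "Dd (p, v) \<subseteq> E0 n k"
proof
  fix e assume "e \<in> Dd (p, v)"
  then obtain a where a: "a \<in> set p" and e: "e = (a, v)" by (auto simp: Dd_def)
  have "1 \<le> fst a \<and> fst a \<le> r \<and> snd a < n" by (rule perfect_entry[OF assms(1,2) a])
  then show "e \<in> E0 n k" using e assms(3,4) by (auto simp: E0_def mem_verts mem_vclass)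
qed

lemma event_iff:
  assumes inj: "inj_on \<pi> (verts n k)" and P: "perfect_rset n r P" and RP: "R \<subseteq> P"
    and S: "S \<subseteq> vclass n (Suc r)" and rk: "Suc r \<le> k"
  shows "event_X r (Phi n k b) \<pi> R S \<longleftrightarrow>
    real (card {j \<in> R \<times> S. restrict b (Dd j) = dd \<pi> j}) < real (card (R \<times> S)) / 2 ^ (r + 1)"
proof -
  have "{(p, v). p \<in> R \<and> v \<in> S \<and> LP_adj (Phi n k b) \<pi> p v} = {j \<in> R \<times> S. restrict b (Dd j) = dd \<pi> j}"
  proof (rule set_eqI)
    fix j :: "(nat \<times> nat) list \<times> (nat \<times> nat)"
    obtain p v where j: "j = (p, v)" by (cases j)
    have key: "LP_adj (Phi n k b) \<pi> p v \<longleftrightarrow> restrict b (Dd j) = dd \<pi> j" if "p \<in> R" "v \<in> S"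
    proof -
      have pP: "p \<in> P" using that RP by auto
      have v: "v \<in> verts n k" "fst v = Suc r" using that S rk by (auto simp: mem_vclass mem_verts)
      have "LP_adj (Phi n k b) \<pi> p v \<longleftrightarrow> (\<forall>a\<in>set p. b (a, v) = (\<pi> a < \<pi> v))"
        unfolding LP_adj_def
      proof (intro ball_cong refl L_edge_Phi inj v(1))
        fix a assume "a \<in> set p"
        then have "1 \<le> fst a \<and> fst a \<le> r \<and> snd a < n" by (rule perfect_entry[OF P pP])
        then show "a \<in> verts n k" "fst a < fst v" using v rk by (auto simp: mem_verts)
      qed
      also have "\<dots> \<longleftrightarrow> restrict b (Dd j) = dd \<pi> j"
        unfolding dd_def restrict_eq_iff' j Dd_def by auto
      finally show ?thesis .
    qed
    show "j \<in> {(p, v). p \<in> R \<and> v \<in> S \<and> LP_adj (Phi n k b) \<pi> p v} \<longleftrightarrow> j \<in> {j \<in> R \<times> S. restrict b (Dd j) = dd \<pi> j}"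
      using key j by auto
  qed
  then show ?thesis unfolding event_X_def by (simp add: card_cartesian_product)
qed

lemma finite_vclass: "finite (vclass n i)"
proof -
  have "vclass n i \<subseteq> {i} \<times> {..<n}" by (auto simp: mem_vclass)
  then show ?thesis by (rule finite_subset) simp
qed

lemma card_vclass: "card (vclass n i) \<le> n"
proof -
  have "card (vclass n i) \<le> card ({i} \<times> {..<n})"
    by (rule card_mono) (auto simp: mem_vclass)
  then show ?thesis by (simp add: card_cartesian_product)
qed

lemma bad_bound:
  assumes P: "perfect_rset n r P" and RP: "R \<subseteq> P"
    and S: "S \<subseteq> vclass n (Suc r)" and rk: "Suc r \<le> k"
  shows "real (card {b \<in> PiE (E0 n k) (\<lambda>_. UNIV).
      real (card {j \<in> R \<times> S. restrict b (Dd j) = dd \<pi> j}) < real (card (R \<times> S)) / 2 ^ (r + 1)})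
    \<le> real (card (PiE (E0 n k) (\<lambda>_. UNIV::bool set))) * exp (- ((1 - ln 2) / 2^(r+1)) * real (card (R \<times> S)))"
proof (rule chernoff_blocks)
  show "finite (R \<times> S)" using perfect_finite[OF P] RP S finite_vclass
    by (meson finite_SigmaI finite_subset)
  show "finite (E0 n k)" by (rule finite_E0)
  show "\<forall>j\<in>R \<times> S. Dd j \<subseteq> E0 n k"
  proof
    fix j assume j: "j \<in> R \<times> S"
    obtain p v where pv: "j = (p, v)" by (cases j)
    show "Dd j \<subseteq> E0 n k" unfolding pv by (rule Dd_sub[OF P _ _ rk]) (use j pv RP S in auto)
  qed
  show "\<forall>i\<in>R \<times> S. \<forall>j\<in>R \<times> S. i \<noteq> j \<longrightarrow> Dd i \<inter> Dd j = {}"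
  proof (intro ballI impI)
    fix i j assume i: "i \<in> R \<times> S" and j: "j \<in> R \<times> S" and ij: "i \<noteq> j"
    show "Dd i \<inter> Dd j = {}"
    proof (cases "fst i = fst j")
      case True
      then have "snd i \<noteq> snd j" using ij by (simp add: prod_eq_iff)
      then show ?thesis by (auto simp: Dd_def)
    next
      case False
      moreover have "fst i \<in> P" "fst j \<in> P" using i j RP by auto
      ultimately have "set (fst i) \<inter> set (fst j) = {}"
        using perfect_disj[OF P] by blast
      then show ?thesis by (auto simp: Dd_def)
    qed
  qed
  show "\<forall>j\<in>R \<times> S. card (Dd j) \<le> r"
  proof
    fix j assume "j \<in> R \<times> S"
    then have "length (fst j) = r" using perfect_len[OF P] RP by auto
    then show "card (Dd j) \<le> r" unfolding Dd_def
      by (metis card_image_le card_length finite_set le_trans)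
  qed
  show "\<forall>j\<in>R \<times> S. dd \<pi> j \<in> PiE (Dd j) (\<lambda>_. UNIV)"
    by (simp add: dd_def)
qed



lemma asym:
  fixes k n :: nat and a :: real
  assumes a: "a > 0" and k: "k \<ge> 1" and K2: "k * n \<ge> 2"
    and big: "real n \<ge> (10 * real k ^ 2 / a) ^ 2"
  shows "real (k * n) ^ (4 * (k * n)) * exp (- (a * (real n * real n))) \<le> 1 / real (k * n)"
proof -
  define K where "K = real (k * n)"
  have K2': "K \<ge> 2" unfolding K_def using K2 by (metis of_nat_le_iff of_nat_numeral)
  have "n \<le> k * n" using k by simp
  then have Kn: "K \<ge> real n" unfolding K_def by (simp only: of_nat_le_iff)
  have Kkn: "K = real k * real n" unfolding K_def by simp
  have lnK: "ln K \<le> 2 * sqrt K"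
  proof -
    have "ln (sqrt K) \<le> sqrt K - 1" using K2' by (intro ln_le_minus_one) simp
    moreover have "ln (sqrt K) = ln K / 2" using K2' by (simp add: ln_sqrt)
    ultimately show ?thesis by simp
  qed
  have sq: "sqrt K \<ge> 10 * real k ^ 2 / a"
  proof -
    have "10 * real k ^ 2 / a = sqrt ((10 * real k ^ 2 / a) ^ 2)" using a by simp
    also have "\<dots> \<le> sqrt K" using big Kn by (intro real_sqrt_le_mono) linarith
    finally show ?thesis .
  qed
  have kpos: "real k > 0" using k by simp
  have "a * sqrt K \<ge> 10 * real k ^ 2" using sq a by (simp add: field_simps)
  then have "a * sqrt K * sqrt K \<ge> 10 * real k ^ 2 * sqrt K"
    using K2' by (intro mult_right_mono) auto
  moreover have "sqrt K * sqrt K = K" using K2' by simp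
  ultimately have h1: "a * K \<ge> 10 * real k ^ 2 * sqrt K" by (simp add: mult.assoc)
  have "5 * K * ln K \<le> 5 * K * (2 * sqrt K)" using lnK K2' by (intro mult_left_mono) auto
  also have "\<dots> = (10 * real k ^ 2 * sqrt K) * K / real k ^ 2" using kpos by (simp add: field_simps)
  also have "\<dots> \<le> (a * K) * K / real k ^ 2" using h1 K2' kpos
    by (intro divide_right_mono mult_right_mono) auto
  also have "\<dots> = a * (real n * real n)" unfolding Kkn using kpos by (simp add: field_simps power2_eq_square)
  finally have main: "5 * K * ln K \<le> a * (real n * real n)" .
  have "K ^ (4 * (k * n)) * K = K ^ (4 * (k * n) + 1)" by simp
  also have "\<dots> \<le> K ^ (5 * (k * n))" using K2' K2 by (intro power_increasing) linarith+
  also have "\<dots> = exp (5 * K * ln K)"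
  proof -
    have "K ^ (5 * (k * n)) = exp (ln (K ^ (5 * (k * n))))" using K2' by simp
    also have "ln (K ^ (5 * (k * n))) = 5 * K * ln K" unfolding ln_realpow K_def by simp
    finally show ?thesis .
  qed
  finally have "K ^ (4 * (k * n)) * K * exp (- (a * (real n * real n)))
      \<le> exp (5 * K * ln K) * exp (- (a * (real n * real n)))" by (intro mult_right_mono) auto
  also have "\<dots> = exp (5 * K * ln K - a * (real n * real n))" by (simp add: exp_diff exp_minus field_simps)
  also have "\<dots> \<le> 1" using main by simp
  finally have "K ^ (4 * (k * n)) * exp (- (a * (real n * real n))) * K \<le> 1" by (simp add: ac_simps)
  then have "K ^ (4 * (k * n)) * exp (- (a * (real n * real n))) \<le> 1 / K"
    using K2' by (simp add: field_simps)
  then show ?thesis unfolding K_def .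
qed

lemma idx_bound:
  fixes n k r :: nat
  assumes rk: "r \<le> k" and K2: "k * n \<ge> 2"
  shows "finite {(\<pi>', R, S). \<pi>' \<in> PiE (verts n k) (\<lambda>_. {1..k*n}) \<and> (\<exists>P. perfect_rset n r P \<and> R \<subseteq> P) \<and> S \<subseteq> vclass n (Suc r)}
    \<and> card {(\<pi>', R, S). \<pi>' \<in> PiE (verts n k) (\<lambda>_. {1..k*n}) \<and> (\<exists>P. perfect_rset n r P \<and> R \<subseteq> P) \<and> S \<subseteq> vclass n (Suc r)}
        \<le> (k * n) ^ (4 * (k * n))"
proof -
  define V where "V = verts n k"
  define K where "K = k * n"
  define Lr where "Lr = {xs. set xs \<subseteq> V \<and> length xs = r}"
  define Ps where "Ps = {P. P \<subseteq> Lr \<and> card P = n}"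
  define Rs where "Rs = (\<Union>P\<in>Ps. Pow P)"
  define A where "A = PiE V (\<lambda>_. {1..K})"
  define C where "C = Pow (vclass n (Suc r))"
  define X where "X = {(\<pi>', R, S). \<pi>' \<in> PiE (verts n k) (\<lambda>_. {1..k*n}) \<and> (\<exists>P. perfect_rset n r P \<and> R \<subseteq> P) \<and> S \<subseteq> vclass n (Suc r)}"
  have fV: "finite V" unfolding V_def by (rule finite_verts)
  have fLr: "finite Lr" unfolding Lr_def using fV by (rule finite_lists_length_eq)
  have fPs: "finite Ps" unfolding Ps_def using fLr by auto
  have fP: "finite P" if "P \<in> Ps" for P using that fLr unfolding Ps_def by (auto intro: finite_subset)
  have fRs: "finite Rs" unfolding Rs_def using fPs fP by auto
  have fA: "finite A" unfolding A_def using fV by (simp add: finite_PiE)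
  have fC: "finite C" unfolding C_def by (simp add: finite_vclass)
  have sub: "X \<subseteq> A \<times> Rs \<times> C"
  proof
    fix x assume "x \<in> X"
    then obtain \<pi>' R S P where x: "x = (\<pi>', R, S)" and pi: "\<pi>' \<in> PiE (verts n k) (\<lambda>_. {1..k*n})"
      and P: "perfect_rset n r P" and RP: "R \<subseteq> P" and S: "S \<subseteq> vclass n (Suc r)"
      unfolding X_def by auto
    have "P \<subseteq> Lr"
    proof
      fix p assume p: "p \<in> P"
      have "set p \<subseteq> V"
      proof
        fix a assume "a \<in> set p"
        then have "1 \<le> fst a \<and> fst a \<le> r \<and> snd a < n" by (rule perfect_entry[OF P p])
        then show "a \<in> V" using rk unfolding V_def by (auto simp: mem_verts)
      qed
      then show "p \<in> Lr" using perfect_len[OF P p] unfolding Lr_def by auto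
    qed
    moreover have "card P = n" using P unfolding perfect_rset_def by auto
    ultimately have "P \<in> Ps" unfolding Ps_def by auto
    then have "R \<in> Rs" unfolding Rs_def using RP by auto
    then show "x \<in> A \<times> Rs \<times> C" using x pi S unfolding A_def C_def V_def K_def by auto
  qed
  have fX: "finite X" using sub fA fRs fC by (meson finite_SigmaI finite_subset)
  have K1: "1 \<le> K" using K2 unfolding K_def by linarith
  have nK: "n \<le> K" using K2 unfolding K_def by (cases k) auto
  have cV: "card V \<le> K" unfolding V_def K_def by (rule card_verts)
  have cA: "card A \<le> K ^ K"
  proof -
    have "card A = K ^ card V" unfolding A_def using fV by (simp add: card_PiE)
    also have "\<dots> \<le> K ^ K" using cV K1 by (rule power_increasing)
    finally show ?thesis .
  qed
  have cLr: "card Lr \<le> K ^ r"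
  proof -
    have "card Lr = card V ^ r" unfolding Lr_def by (rule card_lists_length_eq[OF fV])
    also have "\<dots> \<le> K ^ r" using cV by (rule power_mono) simp
    finally show ?thesis .
  qed
  have cPs: "card Ps \<le> K ^ K"
  proof -
    have "card Ps = card Lr choose n" unfolding Ps_def by (rule n_subsets[OF fLr])
    also have "\<dots> \<le> card Lr ^ n" by (cases "n \<le> card Lr") (auto simp: binomial_le_pow binomial_eq_0)
    also have "\<dots> \<le> (K ^ r) ^ n" using cLr by (rule power_mono) simp
    also have "\<dots> = K ^ (r * n)" by (simp add: power_mult)
    also have "\<dots> \<le> K ^ K" using K1 rk unfolding K_def by (intro power_increasing) auto
    finally show ?thesis .
  qed
  have two: "2 ^ n \<le> K ^ K"
  proof -
    have "(2::nat) ^ n \<le> K ^ n" using K2 unfolding K_def by (intro power_mono) auto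
    also have "\<dots> \<le> K ^ K" using nK K1 by (rule power_increasing)
    finally show ?thesis .
  qed
  have cRs: "card Rs \<le> K ^ K * K ^ K"
  proof -
    have "card Rs \<le> (\<Sum>P\<in>Ps. card (Pow P))" unfolding Rs_def by (rule card_UN_le[OF fPs])
    also have "\<dots> = (\<Sum>P\<in>Ps. 2 ^ n)" using fP by (intro sum.cong refl) (auto simp: card_Pow Ps_def)
    also have "\<dots> = card Ps * 2 ^ n" by simp
    also have "\<dots> \<le> K ^ K * K ^ K" using cPs two by (rule mult_le_mono)
    finally show ?thesis .
  qed
  have cC: "card C \<le> K ^ K"
  proof -
    have "card C = 2 ^ card (vclass n (Suc r))" unfolding C_def by (simp add: card_Pow finite_vclass)
    also have "\<dots> \<le> 2 ^ n" using card_vclass by (rule power_increasing) simp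
    also have "\<dots> \<le> K ^ K" by (rule two)
    finally show ?thesis .
  qed
  have "card X \<le> card (A \<times> Rs \<times> C)" using sub fA fRs fC by (intro card_mono) auto
  also have "\<dots> = card A * card Rs * card C" by (simp add: card_cartesian_product)
  also have "\<dots> \<le> K ^ K * (K ^ K * K ^ K) * K ^ K" using cA cRs cC by (intro mult_le_mono) auto
  also have "\<dots> = K ^ (K + K + K + K)" by (simp add: power_add)
  also have "K + K + K + K = 4 * K" by simp
  finally show ?thesis using fX unfolding X_def K_def by simp
qed



lemma dd_restrict:
  assumes "Dd j \<subseteq> E0 n k"
  shows "dd (restrict \<pi> (verts n k)) j = dd \<pi> j"
  unfolding dd_def
proof (rule restrict_ext)
  fix e assume "e \<in> Dd j"
  then have "e \<in> E0 n k" using assms by auto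
  then have "fst e \<in> verts n k" "snd e \<in> verts n k" by (auto simp: E0_def)
  then show "(restrict \<pi> (verts n k) (fst e) < restrict \<pi> (verts n k) (snd e)) = (\<pi> (fst e) < \<pi> (snd e))"
    by simp
qed

theorem lemma4p4:
  fixes k r :: nat and \<epsilon> :: real
  assumes "k \<ge> 2" and "\<epsilon> > 0" and "1 \<le> r" and "r < k"
  shows "\<exists>N. \<forall>n\<ge>N.
    prob_R n k (\<lambda>T. \<exists>\<pi> P R S.
        is_perm n k \<pi> \<and> perfect_rset n r P \<and>
        R \<subseteq> P \<and> real (card R) \<ge> \<epsilon> * real n \<and>
        S \<subseteq> vclass n (Suc r) \<and> real (card S) \<ge> \<epsilon> * real n \<and>
        event_X r T \<pi> R S)
    \<le> 1 / (real k * real n)"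
proof -
  note k2 = assms(1) and epos = assms(2) and rk0 = assms(4)
  have rk: "Suc r \<le> k" using rk0 by simp
  define c :: real where "c = (1 - ln 2) / 2^(r+1)"
  have cpos: "c > 0" unfolding c_def using ln_2_less_1 by simp
  define a where "a = c * \<epsilon>^2"
  have apos: "a > 0" unfolding a_def using cpos epos by simp
  define N where "N = nat \<lceil>(10 * real k ^ 2 / a) ^ 2\<rceil> + 1"
  show ?thesis
  proof (intro exI allI impI)
    fix n assume nN: "N \<le> n"
    have n1: "n \<ge> 1" using nN unfolding N_def by simp
    have big: "real n \<ge> (10 * real k ^ 2 / a) ^ 2"
    proof -
      have "(10 * real k ^ 2 / a) ^ 2 \<le> real (nat \<lceil>(10 * real k ^ 2 / a) ^ 2\<rceil>)" by linarith
      also have "\<dots> \<le> real n" using nN unfolding N_def by simp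
      finally show ?thesis .
    qed
    have K2: "k * n \<ge> 2" using k2 n1
      by (metis mult.right_neutral mult_le_mono2 order_trans)
    define V where "V = verts n k"
    define F where "F = PiE (E0 n k) (\<lambda>_. UNIV::bool set)"
    define Q where "Q = (\<lambda>T. \<exists>\<pi> P R S.
        is_perm n k \<pi> \<and> perfect_rset n r P \<and>
        R \<subseteq> P \<and> real (card R) \<ge> \<epsilon> * real n \<and>
        S \<subseteq> vclass n (Suc r) \<and> real (card S) \<ge> \<epsilon> * real n \<and>
        event_X r T \<pi> R S)"
    define X where "X = {(\<pi>', R, S). \<pi>' \<in> PiE (verts n k) (\<lambda>_. {1..k*n}) \<and> (\<exists>P. perfect_rset n r P \<and> R \<subseteq> P) \<and> S \<subseteq> vclass n (Suc r)}"
    define Idx where "Idx = {i \<in> X. \<epsilon> * real n \<le> real (card (fst (snd i))) \<and> \<epsilon> * real n \<le> real (card (snd (snd i)))}"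
    define bad where "bad = (\<lambda>(\<pi>', R, S). {b \<in> F.
      real (card {j \<in> R \<times> S. restrict b (Dd j) = dd \<pi>' j}) < real (card (R \<times> S)) / 2 ^ (r + 1)})"
    have Xb: "finite X \<and> card X \<le> (k * n) ^ (4 * (k * n))"
      unfolding X_def using idx_bound[OF _ K2, of r] rk by simp
    have fIdx: "finite Idx" unfolding Idx_def using Xb by simp
    have cIdx: "card Idx \<le> (k * n) ^ (4 * (k * n))"
      using Xb card_mono[of X Idx] unfolding Idx_def by auto
    have fF: "finite F" unfolding F_def by (simp add: finite_PiE finite_E0)
    have sub: "{b \<in> F. Q (Phi n k b)} \<subseteq> (\<Union>i\<in>Idx. bad i)"
    proof
      fix b assume "b \<in> {b \<in> F. Q (Phi n k b)}"
      then have bF: "b \<in> F" and "Q (Phi n k b)" by auto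
      then obtain \<pi> P R S where pi: "is_perm n k \<pi>" and P: "perfect_rset n r P" and RP: "R \<subseteq> P"
        and cR: "real (card R) \<ge> \<epsilon> * real n" and S: "S \<subseteq> vclass n (Suc r)"
        and cS: "real (card S) \<ge> \<epsilon> * real n" and ev: "event_X r (Phi n k b) \<pi> R S"
        unfolding Q_def by blast
      have bij: "bij_betw \<pi> (verts n k) {1..k*n}" using pi unfolding is_perm_def .
      then have inj: "inj_on \<pi> (verts n k)" by (rule bij_betw_imp_inj_on)
      have piV: "restrict \<pi> (verts n k) \<in> PiE (verts n k) (\<lambda>_. {1..k*n})"
        using bij_betw_apply[OF bij] by simp
      have cnt: "real (card {j \<in> R \<times> S. restrict b (Dd j) = dd \<pi> j}) < real (card (R \<times> S)) / 2 ^ (r + 1)"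
        using ev event_iff[OF inj P RP S rk] by simp
      have "{j \<in> R \<times> S. restrict b (Dd j) = dd \<pi> j} = {j \<in> R \<times> S. restrict b (Dd j) = dd (restrict \<pi> (verts n k)) j}"
      proof (rule Collect_cong)
        fix j
        show "(j \<in> R \<times> S \<and> restrict b (Dd j) = dd \<pi> j) \<longleftrightarrow> (j \<in> R \<times> S \<and> restrict b (Dd j) = dd (restrict \<pi> (verts n k)) j)"
        proof (cases "j \<in> R \<times> S")
          case True
          then obtain p v where j: "j = (p, v)" "p \<in> R" "v \<in> S" by auto
          have "Dd j \<subseteq> E0 n k" unfolding j(1) by (rule Dd_sub[OF P _ _ rk]) (use j RP S in auto)
          then show ?thesis using dd_restrict by metis
        qed simp
      qed
      then have "b \<in> bad (restrict \<pi> (verts n k), R, S)" using cnt bF unfolding bad_def by simp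
      moreover have "(restrict \<pi> (verts n k), R, S) \<in> Idx"
        unfolding Idx_def X_def using piV P RP S cR cS by auto
      ultimately show "b \<in> (\<Union>i\<in>Idx. bad i)" by blast
    qed
    have each: "real (card (bad i)) \<le> real (card F) * exp (- (a * (real n * real n)))" if "i \<in> Idx" for i
    proof -
      obtain \<pi>' R S where i: "i = (\<pi>', R, S)" by (cases i)
      from that obtain P where P: "perfect_rset n r P" and RP: "R \<subseteq> P" and S: "S \<subseteq> vclass n (Suc r)"
        and cR: "real (card R) \<ge> \<epsilon> * real n" and cS: "real (card S) \<ge> \<epsilon> * real n"
        unfolding Idx_def X_def i by auto
      have "real (card (bad i)) \<le> real (card F) * exp (- c * real (card (R \<times> S)))"
        unfolding i bad_def F_def c_def using bad_bound[OF P RP S rk] by simp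
      also have "\<dots> \<le> real (card F) * exp (- (a * (real n * real n)))"
      proof (intro mult_left_mono)
        have en: "0 \<le> \<epsilon> * real n" using epos by simp
        have "(\<epsilon> * real n) * (\<epsilon> * real n) \<le> real (card R) * real (card S)"
          using cR cS en by (intro mult_mono) auto
        then have "a * (real n * real n) \<le> c * real (card (R \<times> S))"
          unfolding a_def using cpos by (simp add: card_cartesian_product power2_eq_square mult_left_mono ac_simps)
        then show "exp (- c * real (card (R \<times> S))) \<le> exp (- (a * (real n * real n)))" by simp
      qed simp
      finally show ?thesis .
    qed
    have "real (card {b \<in> F. Q (Phi n k b)}) \<le> real (card (\<Union>i\<in>Idx. bad i))"
    proof -
      have "(\<Union>i\<in>Idx. bad i) \<subseteq> F" unfolding bad_def by auto
      then have "finite (\<Union>i\<in>Idx. bad i)" using fF by (rule finite_subset)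
      then show ?thesis using sub by (intro of_nat_mono card_mono)
    qed
    also have "\<dots> \<le> real (\<Sum>i\<in>Idx. card (bad i))" by (intro of_nat_mono card_UN_le fIdx)
    also have "\<dots> = (\<Sum>i\<in>Idx. real (card (bad i)))" by simp
    also have "\<dots> \<le> (\<Sum>i\<in>Idx. real (card F) * exp (- (a * (real n * real n))))"
      using each by (rule sum_mono)
    also have "\<dots> = real (card F) * (real (card Idx) * exp (- (a * (real n * real n))))" by simp
    also have "\<dots> \<le> real (card F) * (real ((k * n) ^ (4 * (k * n))) * exp (- (a * (real n * real n))))"
    proof -
      have "real (card Idx) \<le> real ((k * n) ^ (4 * (k * n)))" using cIdx by (rule of_nat_mono)
      then show ?thesis by (intro mult_left_mono mult_right_mono) auto
    qed
    also have "\<dots> \<le> real (card F) * (1 / real (k * n))"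
      using asym[OF apos _ K2 big] k2 by (intro mult_left_mono) auto
    finally have main: "real (card {b \<in> F. Q (Phi n k b)}) \<le> real (card F) * (1 / real (k * n))" .
    have Fpos: "card F > 0" using fF unfolding F_def by (simp add: card_gt_0_iff PiE_eq_empty_iff)
    have "prob_R n k Q = real (card {b \<in> F. Q (Phi n k b)}) / real (card F)"
      unfolding F_def by (rule prob_R_eq)
    also have "\<dots> \<le> 1 / real (k * n)" using main Fpos by (simp add: divide_le_eq ac_simps)
    finally show "prob_R n k Q \<le> 1 / (real k * real n)" by simp
  qed
qed

end
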